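(* Let $\ell$ be a prime and let $R,S,T$ be pairwise coprime positive integers. Let $S'=\prod_{q:\ \operatorname{ord}_q(S)\text{ odd}} q$, let $v$ be the positive integer with $SS'=v^2$, let $u=RS'$, and write $TS'=mn^2$ with $m$ a squarefree positive integer and $n$ a positive integer. Let $K=\mathbb{Q}(\sqrt{-m})$, let $\epsilon\in K^*$ be a representative of an element of $\mathcal{E}$, and let $\mathfrak{q}$ be a prime ideal of the ring of integers of $K$. Suppose one of the following holds: (i) $\operatorname{ord}_{\mathfrak q}(v)$, $\operatorname{ord}_{\mathfrak q}(n\sqrt{-m})$, $\operatorname{ord}_{\mathfrak q}(\epsilon)$ are pairwise distinct modulo $\ell$; (ii) $\operatorname{ord}_{\mathfrak q}(2v)$, $\operatorname{ord}_{\mathfrak q}(\epsilon)$, $\operatorname{ord}_{\mathfrak q}(\overline{\epsilon})$ are pairwise distinct modulo $\ell$; (iii) $\operatorname{ord}_{\mathfrak q}(2n\sqrt{-m})$, $\operatorname{ord}_{\mathfrak q}(\epsilon)$, $\operatorname{ord}_{\mathfrak q}(\overline{\epsilon})$ are pairwise distinct modulo $\ell$. Then there are no $\sigma\in\mathbb{Z}$ and $\eta\in K$ satisfying \[ v\sigma^\ell+n\sqrt{-m}=\epsilon\eta^\ell . \]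
   Context: $\mathcal{O}$ denotes the ring of integers of $K$ and $\overline{\cdot}$ complex conjugation. Let $\mathfrak{S}$ be the set of prime ideals of $\mathcal{O}$ dividing $u$ or $2n\sqrt{-m}$. The $\ell$-Selmer group is $K(\mathfrak{S},\ell)=\{\epsilon\in K^*/K^{*\ell}:\operatorname{ord}_{\mathfrak P}(\epsilon)\equiv 0\pmod\ell \text{ for all prime ideals }\mathfrak P\notin\mathfrak{S}\}$, and $\mathcal{E}=\{\epsilon\in K(\mathfrak{S},\ell): \operatorname{Norm}(\epsilon)/u\in\mathbb{Q}^{*\ell}\}$. *)

theory Defs
  imports "HOL-Algebra.Ideal_Product" "HOL-Computational_Algebra.Polynomial"
    "HOL-Computational_Algebra.Squarefree" "HOL-Number_Theory.Cong"
begin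

definition sqrt_neg :: "nat \<Rightarrow> complex" where
  "sqrt_neg m = \<i> * complex_of_real (sqrt (real m))"

definition QF :: "nat \<Rightarrow> complex set" where
  "QF m = {of_rat a + of_rat b * sqrt_neg m | a b. True}"

definition OK :: "nat \<Rightarrow> complex set" where
  "OK m = {x \<in> QF m. algebraic_int x}"

definition OK_ring :: "nat \<Rightarrow> complex ring" where
  "OK_ring m = \<lparr>carrier = OK m, monoid.mult = (*), one = 1, zero = 0, add = (+)\<rparr>"

definition prime_ideal_OK :: "nat \<Rightarrow> complex set \<Rightarrow> bool" where
  "prime_ideal_OK m P \<longleftrightarrow> primeideal P (OK_ring m) \<and> P \<noteq> {0}"

definition ideal_pow :: "nat \<Rightarrow> complex set \<Rightarrow> nat \<Rightarrow> complex set" where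
  "ideal_pow m P k = ((\<lambda>I. ideal_prod (OK_ring m) I P) ^^ k) (OK m)"

definition ordO :: "nat \<Rightarrow> complex set \<Rightarrow> complex \<Rightarrow> nat" where
  "ordO m P a = (GREATEST k. a \<in> ideal_pow m P k)"

definition ordK :: "nat \<Rightarrow> complex set \<Rightarrow> complex \<Rightarrow> int" where
  "ordK m P x = (SOME k. \<exists>a b. a \<in> OK m \<and> b \<in> OK m \<and> a \<noteq> 0 \<and> b \<noteq> 0 \<and> x = a / b
                      \<and> k = int (ordO m P a) - int (ordO m P b))"

definition normK :: "complex \<Rightarrow> complex" where
  "normK x = x * cnj x"

text \<open>x in K^* represents an element of the l-Selmer group K(S,l), where S is the set of
  primes dividing u or 2 n sqrt(-m).\<close>
definition selmer_rep :: "nat \<Rightarrow> nat \<Rightarrow> nat \<Rightarrow> nat \<Rightarrow> complex \<Rightarrow> bool" where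
  "selmer_rep m l u n x \<longleftrightarrow> x \<in> QF m \<and> x \<noteq> 0 \<and>
     (\<forall>P. prime_ideal_OK m P \<and> of_nat u \<notin> P \<and> 2 * of_nat n * sqrt_neg m \<notin> P
          \<longrightarrow> int l dvd ordK m P x)"

definition E_rep :: "nat \<Rightarrow> nat \<Rightarrow> nat \<Rightarrow> nat \<Rightarrow> complex \<Rightarrow> bool" where
  "E_rep m l u n x \<longleftrightarrow> selmer_rep m l u n x \<and>
     (\<exists>r::rat. r \<noteq> 0 \<and> normK x / of_nat u = of_rat (r ^ l))"

definition pw_distinct_mod :: "nat \<Rightarrow> int \<Rightarrow> int \<Rightarrow> int \<Rightarrow> bool" where
  "pw_distinct_mod l a b c \<longleftrightarrow>
     \<not> [a = b] (mod int l) \<and> \<not> [a = c] (mod int l) \<and> \<not> [b = c] (mod int l)"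

end

theory Submission
  imports Defs
begin

lemma of_rat_complex: "(of_rat r :: complex) = complex_of_real (of_rat r)"
  by (cases r) (simp add: of_rat_rat)

lemma cnj_of_rat[simp]: "cnj (of_rat r) = of_rat r"
  by (simp add: of_rat_complex)

lemma sqrt_neg_sq: "sqrt_neg m * sqrt_neg m = - of_nat m"
proof -
  have "sqrt (real m) * sqrt (real m) = real m" by simp
  then have c: "complex_of_real (sqrt (real m)) * complex_of_real (sqrt (real m)) = of_nat m"
    by (simp flip: of_real_mult)
  have "sqrt_neg m * sqrt_neg m = (\<i>*\<i>) * (complex_of_real (sqrt (real m)) * complex_of_real (sqrt (real m)))"
    unfolding sqrt_neg_def by (simp only: ac_simps)
  then show ?thesis using c by simp
qed

lemma cnj_sqrt_neg[simp]: "cnj (sqrt_neg m) = - sqrt_neg m"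
  by (simp add: sqrt_neg_def)

definition tr :: "complex \<Rightarrow> complex" where "tr z = z + cnj z"
definition nm :: "complex \<Rightarrow> complex" where "nm z = z * cnj z"

lemma QF_iff: "z \<in> QF m \<longleftrightarrow> (\<exists>a b. z = of_rat a + of_rat b * sqrt_neg m)"
  by (auto simp: QF_def)

lemma QF_add: "x \<in> QF m \<Longrightarrow> y \<in> QF m \<Longrightarrow> x + y \<in> QF m"
proof -
  assume "x \<in> QF m" "y \<in> QF m"
  then obtain a b c d where xy: "x = of_rat a + of_rat b * sqrt_neg m" "y = of_rat c + of_rat d * sqrt_neg m"
    unfolding QF_iff by blast
  have "x + y = of_rat (a+c) + of_rat (b+d) * sqrt_neg m" unfolding xy by (simp add: of_rat_add algebra_simps)
  then show ?thesis unfolding QF_iff by blast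
qed

lemma QF_minus: "x \<in> QF m \<Longrightarrow> - x \<in> QF m"
proof -
  assume "x \<in> QF m"
  then obtain a b where x: "x = of_rat a + of_rat b * sqrt_neg m" unfolding QF_iff by blast
  have "- x = of_rat (-a) + of_rat (-b) * sqrt_neg m" unfolding x by (simp add: of_rat_minus)
  then show ?thesis unfolding QF_iff by blast
qed

lemma mult_sqrt_neg: "(A + B * sqrt_neg m) * (C + D * sqrt_neg m) = (A*C - of_nat m*B*D) + (A*D+B*C) * sqrt_neg m"
proof -
  have "(A + B * sqrt_neg m) * (C + D * sqrt_neg m) = A*C + (A*D+B*C) * sqrt_neg m + B*D*(sqrt_neg m * sqrt_neg m)"
    by (simp add: algebra_simps)
  also have "\<dots> = (A*C - of_nat m*B*D) + (A*D+B*C) * sqrt_neg m" by (simp add: sqrt_neg_sq)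
  finally show ?thesis .
qed

lemma QF_mult: "x \<in> QF m \<Longrightarrow> y \<in> QF m \<Longrightarrow> x * y \<in> QF m"
proof -
  assume "x \<in> QF m" "y \<in> QF m"
  then obtain a b c d where xy: "x = of_rat a + of_rat b * sqrt_neg m" "y = of_rat c + of_rat d * sqrt_neg m"
    unfolding QF_iff by blast
  have "x * y = of_rat (a*c - of_nat m * b * d) + of_rat (a*d + b*c) * sqrt_neg m"
    unfolding xy mult_sqrt_neg by (simp add: of_rat_add of_rat_mult of_rat_diff)
  then show ?thesis unfolding QF_iff by blast
qed

lemma QF_of_rat: "of_rat a \<in> QF m"
  unfolding QF_iff by (rule exI[of _ a], rule exI[of _ 0]) simp

lemma QF_of_int: "of_int a \<in> QF m"
  using QF_of_rat[of "of_int a" m] by simp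

lemma QF_of_nat: "of_nat a \<in> QF m"
  using QF_of_int[of "int a" m] by simp

lemma QF_sqrt_neg: "sqrt_neg m \<in> QF m"
  unfolding QF_iff by (rule exI[of _ 0], rule exI[of _ 1]) simp

lemma QF_cnj: "x \<in> QF m \<Longrightarrow> cnj x \<in> QF m"
proof -
  assume "x \<in> QF m"
  then obtain a b where x: "x = of_rat a + of_rat b * sqrt_neg m" unfolding QF_iff by blast
  have "cnj x = of_rat a + of_rat (-b) * sqrt_neg m" unfolding x by (simp add: of_rat_minus)
  then show ?thesis unfolding QF_iff by blast
qed

lemma tr_QF: "x \<in> QF m \<Longrightarrow> tr x \<in> \<rat>"
  unfolding QF_iff tr_def by (auto simp flip: of_rat_add)

lemma nm_QF: "x \<in> QF m \<Longrightarrow> nm x \<in> \<rat>"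
proof -
  assume "x \<in> QF m"
  then obtain a b where x: "x = of_rat a + of_rat b * sqrt_neg m" unfolding QF_iff by blast
  have "nm x = (of_rat a + of_rat b * sqrt_neg m) * (of_rat a + (- of_rat b) * sqrt_neg m)"
    unfolding nm_def x by simp
  also have "\<dots> = of_rat (a*a + of_nat m * b * b)"
    unfolding mult_sqrt_neg by (simp add: of_rat_add of_rat_mult)
  finally have "nm x = of_rat (a*a + of_nat m * b * b)" .
  then show ?thesis by simp
qed

lemma nm_nonzero: "x \<noteq> 0 \<Longrightarrow> nm x \<noteq> 0"
  unfolding nm_def by simp

lemma QF_inverse: "x \<in> QF m \<Longrightarrow> inverse x \<in> QF m"
proof (cases "x = 0")
  case False
  assume x: "x \<in> QF m"
  obtain r where r: "nm x = of_rat r" using nm_QF[OF x] by (auto simp: Rats_def)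
  have "inverse x = cnj x / (x * cnj x)" using False by (simp add: field_simps)
  also have "\<dots> = of_rat (inverse r) * cnj x" using r unfolding nm_def by (simp add: of_rat_inverse divide_inverse)
  finally have "inverse x = of_rat (inverse r) * cnj x" .
  then show ?thesis using QF_mult[OF QF_of_rat QF_cnj[OF x]] by simp
qed (simp add: QF_of_int[of 0, simplified])

lemma QF_divide: "x \<in> QF m \<Longrightarrow> y \<in> QF m \<Longrightarrow> x / y \<in> QF m"
  by (simp add: divide_inverse QF_mult QF_inverse)

lemma QF_diff: "x \<in> QF m \<Longrightarrow> y \<in> QF m \<Longrightarrow> x - y \<in> QF m"
  using QF_add[OF _ QF_minus] by (simp only: diff_conv_add_uminus)

lemma QF_power: "x \<in> QF m \<Longrightarrow> x ^ k \<in> QF m"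
  by (induct k) (auto simp: QF_mult QF_of_int[of 1, simplified])


lemma OK_ring_simps[simp]: "carrier (OK_ring m) = OK m" "monoid.mult (OK_ring m) = (*)"
  "add (OK_ring m) = (+)" "one (OK_ring m) = 1" "zero (OK_ring m) = 0"
  by (simp_all add: OK_ring_def)

lemma OK_QF: "x \<in> OK m \<Longrightarrow> x \<in> QF m" by (simp add: OK_def)
lemma OK_alg: "x \<in> OK m \<Longrightarrow> algebraic_int x" by (simp add: OK_def)
lemma OK_of_int[simp]: "of_int a \<in> OK m" by (simp add: OK_def QF_of_int)
lemma OK_of_nat[simp]: "of_nat a \<in> OK m" by (simp add: OK_def QF_of_nat)
lemma OK_1[simp]: "1 \<in> OK m" using OK_of_nat[of 1 m] by simp
lemma OK_0[simp]: "0 \<in> OK m" using OK_of_nat[of 0 m] by simp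
lemma OK_cnj: "x \<in> OK m \<Longrightarrow> cnj x \<in> OK m" by (auto simp: OK_def QF_cnj)
lemma OK_Ints: "z \<in> \<int> \<Longrightarrow> z \<in> OK m" by (auto elim: Ints_cases)

lemma OK_mult: "cring (OK_ring m) \<Longrightarrow> x \<in> OK m \<Longrightarrow> y \<in> OK m \<Longrightarrow> x * y \<in> OK m"
  using cring.cring_simprules(5)[of "OK_ring m" x y] by simp

lemma OK_add: "cring (OK_ring m) \<Longrightarrow> x \<in> OK m \<Longrightarrow> y \<in> OK m \<Longrightarrow> x + y \<in> OK m"
  using ring.ring_simprules(1)[OF cring.axioms(1), of "OK_ring m" x y] by simp

lemma OK_uminus: "cring (OK_ring m) \<Longrightarrow> x \<in> OK m \<Longrightarrow> - x \<in> OK m"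
proof -
  assume c: "cring (OK_ring m)" "x \<in> OK m"
  have "(-1) \<in> OK m" using OK_of_int[of "-1" m] by simp
  then show ?thesis using OK_mult[OF c(1) _ c(2), of "-1"] by simp
qed

lemma OK_diff: "cring (OK_ring m) \<Longrightarrow> x \<in> OK m \<Longrightarrow> y \<in> OK m \<Longrightarrow> x - y \<in> OK m"
  using OK_add[OF _ _ OK_uminus] by (simp only: diff_conv_add_uminus)

lemma OK_power: "cring (OK_ring m) \<Longrightarrow> x \<in> OK m \<Longrightarrow> x ^ k \<in> OK m"
  by (induct k) (auto simp: OK_mult)

lemma OK_tr: "cring (OK_ring m) \<Longrightarrow> x \<in> OK m \<Longrightarrow> tr x \<in> \<int>"
proof -
  assume c: "cring (OK_ring m)" and x: "x \<in> OK m"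
  have "tr x \<in> OK m" unfolding tr_def using OK_add[OF c x OK_cnj[OF x]] .
  then show ?thesis using tr_QF[OF OK_QF[OF x]] rational_algebraic_int_is_int OK_alg by blast
qed

lemma OK_nm: "cring (OK_ring m) \<Longrightarrow> x \<in> OK m \<Longrightarrow> nm x \<in> \<int>"
proof -
  assume c: "cring (OK_ring m)" and x: "x \<in> OK m"
  have "nm x \<in> OK m" unfolding nm_def using OK_mult[OF c x OK_cnj[OF x]] .
  then show ?thesis using nm_QF[OF OK_QF[OF x]] rational_algebraic_int_is_int OK_alg by blast
qed

lemma OK_intro: "x \<in> QF m \<Longrightarrow> tr x \<in> \<int> \<Longrightarrow> nm x \<in> \<int> \<Longrightarrow> x \<in> OK m"
proof -
  assume x: "x \<in> QF m" and t: "tr x \<in> \<int>" and n: "nm x \<in> \<int>"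
  define p where "p = [: nm x, - tr x, 1 :]"
  have "lead_coeff p = 1" unfolding p_def by simp
  moreover have "\<forall>i. coeff p i \<in> \<int>"
  proof
    fix i show "coeff p i \<in> \<int>" unfolding p_def using t n
      by (auto simp: coeff_pCons split: nat.split)
  qed
  moreover have "poly p x = 0" unfolding p_def tr_def nm_def by (simp add: algebra_simps)
  ultimately have "algebraic_int x" by (rule algebraic_int.intros)
  with x show ?thesis by (simp add: OK_def)
qed

lemma OK_iff: "cring (OK_ring m) \<Longrightarrow> x \<in> OK m \<longleftrightarrow> x \<in> QF m \<and> tr x \<in> \<int> \<and> nm x \<in> \<int>"
  using OK_intro[of x m] OK_tr[of m x] OK_nm[of m x] OK_QF[of x m] by blast

lemma ideal_OK:
  assumes "ideal I (OK_ring m)"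
  shows "I \<subseteq> OK m" "0 \<in> I" "x \<in> I \<Longrightarrow> y \<in> I \<Longrightarrow> x + y \<in> I"
        "x \<in> I \<Longrightarrow> a \<in> OK m \<Longrightarrow> a * x \<in> I" "x \<in> I \<Longrightarrow> a \<in> OK m \<Longrightarrow> x * a \<in> I"
proof -
  show "I \<subseteq> OK m" using ideal.Icarr[OF assms] by force
  show "0 \<in> I" using additive_subgroup.zero_closed[OF ideal.axioms(1)[OF assms]] by simp
  show "x \<in> I \<Longrightarrow> y \<in> I \<Longrightarrow> x + y \<in> I"
    using additive_subgroup.a_closed[OF ideal.axioms(1)[OF assms]] by simp
  show "x \<in> I \<Longrightarrow> a \<in> OK m \<Longrightarrow> a * x \<in> I" using ideal.I_l_closed[OF assms] by simp
  show "x \<in> I \<Longrightarrow> a \<in> OK m \<Longrightarrow> x * a \<in> I" using ideal.I_r_closed[OF assms] by simp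
qed


lemma bez: "prime (p::nat) \<Longrightarrow> \<not> int p dvd c \<Longrightarrow> \<exists>a b. a * int p + b * c = 1"
proof -
  assume "prime p" "\<not> int p dvd c"
  then have "coprime (int p) c" using prime_imp_coprime[of "int p" c] by (simp add: prime_nat_int_transfer)
  then have "gcd (int p) c = 1" by (simp add: coprime_iff_gcd_eq_1)
  moreover obtain u v where "u * int p + v * c = gcd (int p) c" using bezout_int by blast
  ultimately show ?thesis by auto
qed

definition Pinv :: "nat \<Rightarrow> complex set \<Rightarrow> complex \<Rightarrow> bool" where
  "Pinv m P d \<longleftrightarrow> d \<in> QF m \<and> (\<forall>z\<in>P. d * z \<in> OK m)"

locale PI =
  fixes m :: nat and P :: "complex set"
  assumes pi: "prime_ideal_OK m P"
begin

lemma prime: "primeideal P (OK_ring m)" using pi by (simp add: prime_ideal_OK_def)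
lemma cr: "cring (OK_ring m)" using primeideal.axioms(2)[OF prime] .
lemma idl: "ideal P (OK_ring m)" using primeideal.axioms(1)[OF prime] .
lemma P_OK: "x \<in> P \<Longrightarrow> x \<in> OK m" using ideal_OK(1)[OF idl] by blast
lemma P_0: "0 \<in> P" using ideal_OK(2)[OF idl] .
lemma P_add: "x \<in> P \<Longrightarrow> y \<in> P \<Longrightarrow> x + y \<in> P" using ideal_OK(3)[OF idl] .
lemma P_lmult: "x \<in> P \<Longrightarrow> a \<in> OK m \<Longrightarrow> a * x \<in> P" using ideal_OK(4)[OF idl] .
lemma P_rmult: "x \<in> P \<Longrightarrow> a \<in> OK m \<Longrightarrow> x * a \<in> P" using ideal_OK(5)[OF idl] .
lemma P_uminus: "x \<in> P \<Longrightarrow> - x \<in> P"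
  using P_lmult[of x "-1"] OK_of_int[of "-1" m] by simp
lemma P_diff: "x \<in> P \<Longrightarrow> y \<in> P \<Longrightarrow> x - y \<in> P"
  using P_add[OF _ P_uminus] by (simp only: diff_conv_add_uminus)
lemma P_prime: "a \<in> OK m \<Longrightarrow> b \<in> OK m \<Longrightarrow> a * b \<in> P \<Longrightarrow> a \<in> P \<or> b \<in> P"
  using primeideal.I_prime[OF prime, of a b] by simp
lemma one_notin: "1 \<notin> P"
proof
  assume "1 \<in> P"
  then have "OK m \<subseteq> P" using P_rmult[of 1] by auto
  then have "carrier (OK_ring m) = P" using P_OK by auto
  then show False using primeideal.I_notcarr[OF prime] by simp
qed
lemma P_nonzero: "\<exists>x\<in>P. x \<noteq> 0" using pi P_0 unfolding prime_ideal_OK_def by blast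

lemma nm_P: "x \<in> P \<Longrightarrow> nm x \<in> P"
  unfolding nm_def using P_rmult OK_cnj P_OK by blast

lemma int_exists: "\<exists>N::nat. N > 0 \<and> of_nat N \<in> P"
proof -
  obtain x where x: "x \<in> P" "x \<noteq> 0" using P_nonzero by blast
  have "nm x \<in> \<int>" using OK_nm[OF cr P_OK[OF x(1)]] .
  then obtain k where k: "nm x = of_int k" by (auto elim: Ints_cases)
  have "k \<noteq> 0" using nm_nonzero[OF x(2)] k by auto
  show ?thesis
  proof (cases "k > 0")
    case True
    then have "of_nat (nat k) = nm x" using k by simp
    then show ?thesis using True nm_P[OF x(1)] by (intro exI[of _ "nat k"]) auto
  next
    case False
    then have "of_nat (nat (-k)) = - nm x" using k by simp
    then show ?thesis using False \<open>k \<noteq> 0\<close> P_uminus[OF nm_P[OF x(1)]] by (intro exI[of _ "nat (-k)"]) auto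
  qed
qed

definition p :: nat where "p = (LEAST N::nat. N > 0 \<and> of_nat N \<in> P)"

lemma p_props: "p > 0" "of_nat p \<in> P"
  using LeastI_ex[OF int_exists] unfolding p_def by auto

lemma p_min: "0 < N \<Longrightarrow> of_nat N \<in> P \<Longrightarrow> p \<le> N"
  unfolding p_def by (rule Least_le) simp

lemma p_gt1: "p > 1"
  using p_props one_notin by (cases "p = 1") auto

lemma int_P_iff: "of_int z \<in> P \<longleftrightarrow> int p dvd z"
proof
  assume "int p dvd z"
  then obtain k where "z = int p * k" by blast
  then have "of_int z = of_nat p * (of_int k :: complex)" by simp
  then show "of_int z \<in> P" using P_rmult[OF p_props(2), of "of_int k"] by simp
next
  assume z: "of_int z \<in> P"
  define r where "r = z mod int p"
  have "r = z - int p * (z div int p)" unfolding r_def using minus_mult_div_eq_mod[of z "int p"] by simp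
  then have "of_int r = (of_int z :: complex) - of_nat p * of_int (z div int p)" by simp
  also have "\<dots> \<in> P" using P_diff[OF z P_rmult[OF p_props(2)]] by simp
  finally have rP: "of_int r \<in> P" .
  have r: "0 \<le> r" "r < int p" unfolding r_def using p_props(1) by auto
  show "int p dvd z"
  proof (cases "r = 0")
    case True then show ?thesis unfolding r_def by presburger
  next
    case False
    then have "0 < nat r" "of_nat (nat r) \<in> P" using r rP by auto
    then have "p \<le> nat r" by (rule p_min)
    then show ?thesis using r by linarith
  qed
qed

lemma p_prime: "prime p"
  unfolding prime_nat_iff
proof (intro conjI allI impI)
  show "1 < p" by (rule p_gt1)
  fix d assume "d dvd p"
  then obtain e where e: "p = d * e" by blast
  then have pos: "d > 0" "e > 0" using p_props(1) by auto
  have "of_nat d * of_nat e \<in> P" using p_props(2) e by simp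
  then have "of_nat d \<in> P \<or> of_nat e \<in> P" using P_prime by simp
  then show "d = 1 \<or> d = p"
  proof
    assume "of_nat d \<in> P"
    then have "p \<le> d" using pos by (intro p_min) auto
    moreover have "d \<le> p" using e pos by simp
    ultimately show ?thesis by simp
  next
    assume "of_nat e \<in> P"
    then have "p \<le> e" using pos by (intro p_min) auto
    moreover have "e \<le> p" using e pos by simp
    ultimately have "e = p" by simp
    then have h: "p = d * p" using e by (simp only:)
    have "d = 1"
    proof (rule ccontr)
      assume "d \<noteq> 1"
      then have "d \<ge> 2" using pos by simp
      then have "d * p \<ge> 2 * p" by simp
      then show False using h p_props(1) by linarith
    qed
    then show ?thesis ..
  qed
qed

lemma Ints_P: "z \<in> \<int> \<Longrightarrow> z \<in> P \<Longrightarrow> \<exists>k. z = of_int (int p * k)"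
proof -
  assume "z \<in> \<int>" "z \<in> P"
  then obtain j where "z = of_int j" "of_int j \<in> P" by (auto elim: Ints_cases)
  then show ?thesis using int_P_iff by (auto elim: dvdE)
qed

lemma p_nz: "(of_nat p :: complex) \<noteq> 0" using p_props(1) by simp

lemma Pinv_conj: "x \<in> P \<Longrightarrow> y \<in> P \<Longrightarrow> x * cnj y / of_nat p \<in> OK m"
proof -
  assume x: "x \<in> P" and y: "y \<in> P"
  define w where "w = x * cnj y / of_nat p"
  have wQ: "w \<in> QF m" unfolding w_def
    using QF_divide[OF QF_mult[OF OK_QF[OF P_OK[OF x]] QF_cnj[OF OK_QF[OF P_OK[OF y]]]] QF_of_nat] .
  have s1: "x * cnj y \<in> P" using P_rmult[OF x OK_cnj[OF P_OK[OF y]]] .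
  have s2: "cnj x * y \<in> P" using P_lmult[OF y OK_cnj[OF P_OK[OF x]]] .
  have "x * cnj y + cnj x * y = tr (x * cnj y)" unfolding tr_def by simp
  moreover have "tr (x * cnj y) \<in> \<int>"
    using OK_tr[OF cr OK_mult[OF cr P_OK[OF x] OK_cnj[OF P_OK[OF y]]]] .
  ultimately obtain k where k: "x * cnj y + cnj x * y = of_int (int p * k)"
    using Ints_P[OF _ P_add[OF s1 s2]] by auto
  have "tr w = (x * cnj y + cnj x * y) / of_nat p" unfolding w_def tr_def by (simp add: add_divide_distrib)
  also have "\<dots> = of_int k" using k p_nz by simp
  finally have t: "tr w \<in> \<int>" by simp
  obtain a where a: "nm x = of_int (int p * a)"
    using Ints_P[OF OK_nm[OF cr P_OK[OF x]] nm_P[OF x]] by blast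
  obtain b where b: "nm y = of_int (int p * b)"
    using Ints_P[OF OK_nm[OF cr P_OK[OF y]] nm_P[OF y]] by blast
  have "nm w = nm x * nm y / (of_nat p * of_nat p)" unfolding w_def nm_def by simp
  also have "\<dots> = of_int (a * b)" unfolding a b using p_nz by simp
  finally have n: "nm w \<in> \<int>" by simp
  show ?thesis using OK_intro[OF wQ t n] unfolding w_def .
qed

lemma INV: "\<exists>ps. sum_list (map (\<lambda>(a,b). a * b) ps) = 1 \<and> (\<forall>(a,b)\<in>set ps. a \<in> P \<and> Pinv m P b)"
proof (cases "\<forall>x\<in>P. x / of_nat p \<in> OK m")
  case True
  have "Pinv m P (1 / of_nat p)" unfolding Pinv_def using True QF_divide[OF QF_of_nat[of 1 m] QF_of_nat[of p m]] by simp
  then show ?thesis using p_props(2) p_nz by (intro exI[of _ "[(of_nat p, 1 / of_nat p)]"]) simp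
next
  case False
  then obtain x where x: "x \<in> P" "x / of_nat p \<notin> OK m" by blast
  have xQ: "x \<in> QF m" using OK_QF[OF P_OK[OF x(1)]] .
  obtain t where t: "tr x = of_int t" using OK_tr[OF cr P_OK[OF x(1)]] by (auto elim: Ints_cases)
  obtain c where c: "nm x = of_int (int p * c)"
    using Ints_P[OF OK_nm[OF cr P_OK[OF x(1)]] nm_P[OF x(1)]] by blast
  have Pa: "Pinv m P (of_int a)" for a unfolding Pinv_def
    using QF_of_int OK_mult[OF cr OK_of_int P_OK] by blast
  have Pb: "Pinv m P (of_int b * cnj x / of_nat p)" for b
  proof -
    show ?thesis unfolding Pinv_def
    proof (intro conjI ballI)
      show "of_int b * cnj x / of_nat p \<in> QF m"
        using QF_divide[OF QF_mult[OF QF_of_int QF_cnj[OF xQ]] QF_of_nat] .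
      fix z assume z: "z \<in> P"
      have e: "of_int b * cnj x / of_nat p * z = of_int b * (z * cnj x / of_nat p)" by simp
      show "of_int b * cnj x / of_nat p * z \<in> OK m"
        unfolding e by (rule OK_mult[OF cr OK_of_int Pinv_conj[OF z x(1)]])
    qed
  qed
  have pp: "prime p" by (rule p_prime)
  show ?thesis
  proof (cases "int p dvd c")
    case False
    then obtain a b where ab: "a * int p + b * c = 1" using bez[OF pp] by blast
    have "of_nat p * of_int a + x * (of_int b * cnj x / of_nat p) = of_int (a * int p + b * c)"
    proof -
      have "x * (of_int b * cnj x / of_nat p) = of_int b * nm x / of_nat p" unfolding nm_def by simp
      also have "\<dots> = of_int (b * c)" unfolding c using p_nz by simp
      finally show ?thesis by simp
    qed
    then have "of_nat p * of_int a + x * (of_int b * cnj x / of_nat p) = 1" using ab by simp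
    then show ?thesis using p_props(2) x(1) Pa Pb
      by (intro exI[of _ "[(of_nat p, of_int a), (x, of_int b * cnj x / of_nat p)]"]) simp
  next
    case True
    then obtain c' where c': "c = int p * c'" by blast
    have "\<not> int p dvd t"
    proof
      assume "int p dvd t"
      then obtain t' where t': "t = int p * t'" by blast
      have "tr (x / of_nat p) = tr x / of_nat p" unfolding tr_def by (simp add: add_divide_distrib)
      also have "\<dots> = of_int t'" unfolding t t' using p_nz by simp
      finally have "tr (x / of_nat p) \<in> \<int>" by simp
      moreover have "nm (x / of_nat p) = nm x / (of_nat p * of_nat p)" unfolding nm_def by simp
      then have "nm (x / of_nat p) = of_int c'" unfolding c c' using p_nz by simp
      then have "nm (x / of_nat p) \<in> \<int>" by simp
      ultimately have "x / of_nat p \<in> OK m" using OK_intro QF_divide[OF xQ QF_of_nat] by blast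
      then show False using x(2) by simp
    qed
    then obtain a b where ab: "a * int p + b * t = 1" using bez[OF pp] by blast
    have "of_nat p * of_int a + x * of_int b + of_nat p * (of_int b * cnj x / of_nat p) = of_int b * tr x + of_int a * of_nat p"
      unfolding tr_def using p_nz by (simp add: algebra_simps)
    also have "\<dots> = of_int (a * int p + b * t)" unfolding t by simp
    finally have "of_nat p * of_int a + x * of_int b + of_nat p * (of_int b * cnj x / of_nat p) = 1" using ab by simp
    then show ?thesis using p_props(2) x(1) Pa Pb
      by (intro exI[of _ "[(of_nat p, of_int a), (x, of_int b), (of_nat p, of_int b * cnj x / of_nat p)]"]) (simp add: add.assoc)
  qed
qed

end

lemma rat_rep: "(q::complex) \<in> \<rat> \<Longrightarrow> \<exists>u w. w > 0 \<and> coprime u w \<and> q = of_int u / of_int w"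
proof -
  assume "q \<in> \<rat>"
  then obtain r where r: "q = of_rat r" by (auto elim: Rats_cases)
  obtain u w where uw: "quotient_of r = (u, w)" by (cases "quotient_of r") auto
  have "r = of_int u / of_int w" using quotient_of_div[OF uw] .
  then have "q = of_int u / of_int w" unfolding r by (simp add: of_rat_divide)
  then show ?thesis using quotient_of_denom_pos[OF uw] quotient_of_coprime[OF uw] by blast
qed

lemma coprime_shift: "(w::int) dvd (a - b) \<Longrightarrow> coprime b w \<Longrightarrow> coprime a w"
proof (rule coprimeI)
  fix c assume h: "w dvd (a - b)" "coprime b w" "c dvd a" "c dvd w"
  then have "c dvd (a - b)" using dvd_trans by blast
  moreover have "b = a - (a - b)" by simp
  ultimately have "c dvd b" using dvd_diff[OF h(3) \<open>c dvd (a - b)\<close>] by simp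
  then show "is_unit c" using coprime_common_divisor[OF h(2) _ h(4)] by blast
qed

lemma DEN:
  assumes w: "(w::int) > 1" and C: "C \<noteq> 0" and f: "\<forall>j. j \<le> f j"
    and X: "\<forall>j. \<exists>U. X j = (of_int U / of_int (w ^ f j) :: complex) \<and> coprime U w \<and> of_int C * X j \<in> \<int>"
  shows False
proof -
  define j where "j = nat \<bar>C\<bar>"
  obtain U where U: "X j = of_int U / of_int (w ^ f j)" "coprime U w" "of_int C * X j \<in> \<int>" using X by blast
  define W where "W = w ^ f j"
  have W0: "W \<noteq> 0" unfolding W_def using w by simp
  obtain z where z: "of_int C * X j = (of_int z :: complex)" using U(3) by (auto elim: Ints_cases)
  have "(of_int (C * U) :: complex) = of_int (z * W)"
    using z U(1) W0 unfolding W_def[symmetric] by (simp add: field_simps)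
  then have "C * U = z * W" by (simp only: of_int_eq_iff)
  then have "W dvd C * U" by simp
  moreover have "coprime W U" unfolding W_def using U(2) by (simp add: coprime_commute)
  ultimately have "W dvd C" using coprime_dvd_mult_left_iff by blast
  then have "\<bar>W\<bar> \<le> \<bar>C\<bar>" using C by (simp add: dvd_imp_le_int)
  moreover have "(2::int) ^ j \<le> \<bar>W\<bar>"
  proof -
    have "(2::int) ^ j \<le> 2 ^ f j" using f by (simp add: power_increasing)
    also have "\<dots> \<le> w ^ f j" using w by (simp add: power_mono)
    finally show ?thesis unfolding W_def by simp
  qed
  moreover have "int j < 2 ^ j" proof -
    have "j < 2 ^ j" by (rule less_exp)
    then have "int j < int (2 ^ j)" by (simp only: of_nat_less_iff)
    then show ?thesis by simp
  qed
  ultimately show False unfolding j_def by simp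
qed

lemma tr_mult_self: "tr (y * y) = tr y * tr y - 2 * nm y"
  unfolding tr_def nm_def by (simp add: algebra_simps)

lemma nm_power: "nm (y ^ k) = nm y ^ k"
  unfolding nm_def by (simp add: power_mult_distrib)

lemma tr_mult_int: "tr (y * of_int C) = of_int C * tr y"
  unfolding tr_def by (simp add: algebra_simps)

lemma nm_mult_int: "nm (y * of_int C) = nm y * of_int C ^ 2"
  unfolding nm_def by (simp add: algebra_simps power2_eq_square)

lemma BD_int:
  assumes cr: "cring (OK_ring m)" and C: "C \<noteq> 0" and d: "d \<in> QF m"
    and k: "\<forall>k. d ^ k * of_int C \<in> OK m"
  shows "d \<in> OK m"
proof -
  have nmI: "nm d \<in> \<int>"
  proof -
    obtain u w where uw: "w > 0" "coprime u w" "nm d = of_int u / of_int w" using rat_rep[OF nm_QF[OF d]] by blast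
    show ?thesis
    proof (cases "w = 1")
      case True then show ?thesis using uw by simp
    next
      case False
      then have w1: "w > 1" using uw by simp
      have "\<forall>j. \<exists>U. nm d ^ j = (of_int U / of_int (w ^ id j) :: complex) \<and> coprime U w \<and> of_int (C^2) * nm d ^ j \<in> \<int>"
      proof
        fix j
        have "of_int (C^2) * nm d ^ j = nm (d ^ j * of_int C)" by (simp add: nm_mult_int nm_power)
        also have "\<dots> \<in> \<int>" using OK_nm[OF cr] k by blast
        finally have i: "of_int (C^2) * nm d ^ j \<in> \<int>" .
        have "nm d ^ j = of_int (u ^ j) / of_int (w ^ id j)" unfolding uw(3) by (simp add: power_divide)
        moreover have "coprime (u ^ j) w" using uw(2) by simp
        ultimately show "\<exists>U. nm d ^ j = (of_int U / of_int (w ^ id j) :: complex) \<and> coprime U w \<and> of_int (C^2) * nm d ^ j \<in> \<int>"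
          using i by blast
      qed
      then have False using DEN[OF w1, of "C^2" id "\<lambda>j. nm d ^ j"] C by simp
      then show ?thesis ..
    qed
  qed
  then obtain N where N: "nm d = of_int N" by (auto elim: Ints_cases)
  have trI: "tr d \<in> \<int>"
  proof -
    obtain u w where uw: "w > 0" "coprime u w" "tr d = of_int u / of_int w" using rat_rep[OF tr_QF[OF d]] by blast
    show ?thesis
    proof (cases "w = 1")
      case True then show ?thesis using uw by simp
    next
      case False
      then have w1: "w > 1" using uw by simp
      have claim: "\<exists>U. tr (d ^ (2 ^ j)) = (of_int U / of_int (w ^ (2 ^ j)) :: complex) \<and> coprime U w" for j
      proof (induct j)
        case 0 then show ?case using uw by simp
      next
        case (Suc j)
        then obtain U where U: "tr (d ^ (2 ^ j)) = of_int U / of_int (w ^ (2 ^ j))" "coprime U w" by blast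
        define W where "W = w ^ (2 ^ j)"
        have W0: "W \<noteq> 0" unfolding W_def using w1 by simp
        define U' where "U' = U * U - 2 * N ^ (2 ^ j) * (W * W)"
        have pw: "d ^ (2 ^ Suc j) = d ^ (2 ^ j) * d ^ (2 ^ j)" by (simp add: power_add[symmetric] mult_2)
        have WW: "w ^ (2 ^ Suc j) = W * W" unfolding W_def by (simp add: power_add[symmetric] mult_2)
        have "tr (d ^ (2 ^ Suc j)) = tr (d ^ (2 ^ j)) * tr (d ^ (2 ^ j)) - 2 * nm d ^ (2 ^ j)"
          unfolding pw tr_mult_self nm_power ..
        also have "\<dots> = of_int U' / of_int (w ^ (2 ^ Suc j))"
          unfolding U(1) WW U'_def N W_def[symmetric] using W0 by (simp add: field_simps)
        finally have e: "tr (d ^ (2 ^ Suc j)) = of_int U' / of_int (w ^ (2 ^ Suc j))" .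
        have "w dvd W" unfolding W_def by simp
        then have "w dvd U' - U * U" unfolding U'_def by simp
        moreover have "coprime (U * U) w" using U(2) by simp
        ultimately have "coprime U' w" by (rule coprime_shift)
        then show ?case using e by blast
      qed
      have "\<forall>j. \<exists>U. tr (d ^ (2 ^ j)) = (of_int U / of_int (w ^ (2 ^ j)) :: complex) \<and> coprime U w \<and> of_int C * tr (d ^ (2 ^ j)) \<in> \<int>"
      proof
        fix j
        have "of_int C * tr (d ^ (2 ^ j)) = tr (d ^ (2 ^ j) * of_int C)" by (simp add: tr_mult_int)
        also have "\<dots> \<in> \<int>" using OK_tr[OF cr] k by blast
        finally show "\<exists>U. tr (d ^ (2 ^ j)) = (of_int U / of_int (w ^ (2 ^ j)) :: complex) \<and> coprime U w \<and> of_int C * tr (d ^ (2 ^ j)) \<in> \<int>"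
          using claim[of j] by blast
      qed
      moreover have "\<forall>j. j \<le> (2::nat) ^ j" using less_exp less_imp_le by blast
      ultimately have False using DEN[OF w1 C, of "\<lambda>j. 2 ^ j" "\<lambda>j. tr (d ^ (2 ^ j))"] by blast
      then show ?thesis ..
    qed
  qed
  show ?thesis using OK_intro[OF d trI nmI] .
qed

lemma BD:
  assumes cr: "cring (OK_ring m)" and x: "x \<in> OK m" "x \<noteq> 0" and d: "d \<in> QF m"
    and k: "\<forall>k. d ^ k * x \<in> OK m"
  shows "d \<in> OK m"
proof -
  obtain C where C: "nm x = of_int C" using OK_nm[OF cr x(1)] by (auto elim: Ints_cases)
  have C0: "C \<noteq> 0" using nm_nonzero[OF x(2)] C by auto
  have "d ^ k * of_int C \<in> OK m" for k
  proof -
    have e: "d ^ k * of_int C = (d ^ k * x) * cnj x" using C unfolding nm_def by (simp add: algebra_simps)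
    show ?thesis unfolding e by (rule OK_mult[OF cr k[rule_format] OK_cnj[OF x(1)]])
  qed
  then show ?thesis using BD_int[OF cr C0 d] by blast
qed


lemma OK_sum_list: "cring (OK_ring m) \<Longrightarrow> \<forall>z\<in>set zs. z \<in> OK m \<Longrightarrow> sum_list zs \<in> OK m"
  by (induct zs) (auto simp: OK_add)

lemma ideal_sum_list: "ideal I (OK_ring m) \<Longrightarrow> \<forall>z\<in>set zs. z \<in> I \<Longrightarrow> sum_list zs \<in> I"
  by (induct zs) (auto simp: ideal_OK)

lemma sum_list_expand: "sum_list (map (\<lambda>(a,b). a * (b * y)) xs) = sum_list (map (\<lambda>(a,b). a * b) xs) * (y::complex)"
  by (induct xs) (auto simp: algebra_simps)

context PI begin

definition ps where "ps = (SOME ps. sum_list (map (\<lambda>(a,b). a * b) ps) = 1 \<and> (\<forall>(a,b)\<in>set ps. a \<in> P \<and> Pinv m P b))"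

lemma ps_props: "sum_list (map (\<lambda>(a,b). a * b) ps) = 1" "\<forall>(a,b)\<in>set ps. a \<in> P \<and> Pinv m P b"
  using someI_ex[OF INV] unfolding ps_def by blast+

definition Dl :: "complex set" where "Dl = snd ` set ps"

lemma Dl_Pinv: "d \<in> Dl \<Longrightarrow> Pinv m P d" using ps_props(2) unfolding Dl_def by auto
lemma Dl_mult: "d \<in> Dl \<Longrightarrow> z \<in> P \<Longrightarrow> d * z \<in> OK m" using Dl_Pinv unfolding Pinv_def by blast
lemma Dl_QF: "d \<in> Dl \<Longrightarrow> d \<in> QF m" using Dl_Pinv unfolding Pinv_def by blast
lemma ps_fst: "(a, b) \<in> set ps \<Longrightarrow> a \<in> P" using ps_props(2) by auto
lemma ps_snd: "(a, b) \<in> set ps \<Longrightarrow> b \<in> Dl" unfolding Dl_def by force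

lemma expand: "sum_list (map (\<lambda>(a,b). a * (b * y)) ps) = y"
  unfolding sum_list_expand ps_props(1) by simp

definition D :: "nat \<Rightarrow> complex \<Rightarrow> bool" where
  "D k x \<longleftrightarrow> x \<in> OK m \<and> (\<forall>ds. set ds \<subseteq> Dl \<and> length ds = k \<longrightarrow> prod_list ds * x \<in> OK m)"

lemma D_app: "D k x \<Longrightarrow> set ds \<subseteq> Dl \<Longrightarrow> length ds = k \<Longrightarrow> prod_list ds * x \<in> OK m"
  unfolding D_def by blast

lemma D_OK: "D k x \<Longrightarrow> x \<in> OK m"
  unfolding D_def by blast

lemma D_down: "D (Suc k) x \<Longrightarrow> D k x"
proof -
  assume h: "D (Suc k) x"
  have "prod_list ds * x \<in> OK m" if ds: "set ds \<subseteq> Dl" "length ds = k" for ds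
  proof -
    have "prod_list ds * x = sum_list (map (\<lambda>(a,b). a * (b * (prod_list ds * x))) ps)" by (rule expand[symmetric])
    also have "\<dots> \<in> OK m"
    proof (rule OK_sum_list[OF cr], rule ballI)
      fix z assume "z \<in> set (map (\<lambda>(a,b). a * (b * (prod_list ds * x))) ps)"
      then obtain a b where ab: "(a,b) \<in> set ps" "z = a * (b * (prod_list ds * x))" by auto
      have e: "b * (prod_list ds * x) = prod_list (b # ds) * x" by simp
      have "set (b # ds) \<subseteq> Dl" using ds ps_snd[OF ab(1)] by simp
      then have "prod_list (b # ds) * x \<in> OK m" by (rule D_app[OF h]) (use ds in simp)
      then show "z \<in> OK m" unfolding ab(2) e using OK_mult[OF cr P_OK[OF ps_fst[OF ab(1)]]] by blast
    qed
    finally show ?thesis .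
  qed
  then show ?thesis using h unfolding D_def by blast
qed

lemma D_le: "j \<le> k \<Longrightarrow> D k x \<Longrightarrow> D j x"
proof (induct k)
  case 0 then show ?case by simp
next
  case (Suc k) then show ?case using D_down by (cases "j = Suc k") auto
qed

lemma ip0: "ideal_pow m P 0 = OK m" by (simp add: ideal_pow_def)
lemma ipS: "ideal_pow m P (Suc k) = ideal_prod (OK_ring m) (ideal_pow m P k) P" by (simp add: ideal_pow_def)

lemma rg: "ring (OK_ring m)" using cring.axioms(1)[OF cr] .

lemma ip_ideal: "ideal (ideal_pow m P k) (OK_ring m)"
proof (induct k)
  case 0 then show ?case using ring.oneideal[OF rg] by (simp add: ip0)
next
  case (Suc k) then show ?case unfolding ipS using ring.ideal_prod_is_ideal[OF rg _ idl] by blast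
qed

lemma ip_D: "x \<in> ideal_pow m P k \<Longrightarrow> D k x"
proof (induct k arbitrary: x)
  case 0 then show ?case by (simp add: D_def ip0)
next
  case (Suc k)
  from Suc.prems have "x \<in> ideal_prod (OK_ring m) (ideal_pow m P k) P" by (simp add: ipS)
  then show ?case
  proof (induct x rule: ideal_prod.induct)
    case (prod i j)
    have Di: "D k i" using Suc.hyps prod.hyps(1) by blast
    have iO: "i \<in> OK m" using Di unfolding D_def by blast
    have jO: "j \<in> OK m" using P_OK[OF prod.hyps(2)] .
    have "prod_list ds * (i * j) \<in> OK m" if ds: "set ds \<subseteq> Dl" "length ds = Suc k" for ds
    proof -
      obtain d ds' where dd: "ds = d # ds'" using ds(2) by (cases ds) auto
      have e: "prod_list ds * (i * j) = (prod_list ds' * i) * (d * j)" unfolding dd by (simp add: algebra_simps)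
      have "prod_list ds' * i \<in> OK m" using Di ds dd unfolding D_def by simp
      moreover have "d * j \<in> OK m" using Dl_mult[OF _ prod.hyps(2)] ds dd by simp
      ultimately show ?thesis unfolding e using OK_mult[OF cr] by blast
    qed
    then show ?case unfolding D_def using OK_mult[OF cr iO jO] by simp
  next
    case (sum s1 s2)
    have "prod_list ds * (s1 + s2) \<in> OK m" if ds: "set ds \<subseteq> Dl" "length ds = Suc k" for ds
    proof -
      have e: "prod_list ds * (s1 + s2) = prod_list ds * s1 + prod_list ds * s2" by (simp add: algebra_simps)
      show ?thesis unfolding e using sum.hyps(2,4) ds unfolding D_def using OK_add[OF cr] by simp
    qed
    then show ?case unfolding D_def using sum.hyps(2,4) unfolding D_def using OK_add[OF cr] by simp
  qed
qed

lemma D_ip: "D k x \<Longrightarrow> x \<in> ideal_pow m P k"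
proof (induct k arbitrary: x)
  case 0 then show ?case by (simp add: D_def ip0)
next
  case (Suc k)
  have x: "x = sum_list (map (\<lambda>(a,b). a * (b * x)) ps)" by (rule expand[symmetric])
  have "\<forall>z \<in> set (map (\<lambda>(a,b). a * (b * x)) ps). z \<in> ideal_pow m P (Suc k)"
  proof
    fix z assume "z \<in> set (map (\<lambda>(a,b). a * (b * x)) ps)"
    then obtain a b where ab: "(a,b) \<in> set ps" "z = a * (b * x)" by auto
    have b: "b \<in> Dl" using ps_snd[OF ab(1)] .
    have "D 1 x" using D_le[OF _ Suc.prems, of 1] by simp
    then have "prod_list [b] * x \<in> OK m" using b by (intro D_app) auto
    then have bx: "b * x \<in> OK m" by simp
    have "prod_list ds * (b * x) \<in> OK m" if ds: "set ds \<subseteq> Dl" "length ds = k" for ds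
    proof -
      have e: "prod_list ds * (b * x) = prod_list (b # ds) * x" by simp
      show ?thesis unfolding e using Suc.prems ds b by (intro D_app) auto
    qed
    then have "D k (b * x)" using bx unfolding D_def by blast
    then have "b * x \<in> ideal_pow m P k" by (rule Suc.hyps)
    then have "(b * x) \<otimes>\<^bsub>OK_ring m\<^esub> a \<in> ideal_prod (OK_ring m) (ideal_pow m P k) P"
      using ps_fst[OF ab(1)] by (rule ideal_prod.prod)
    then show "z \<in> ideal_pow m P (Suc k)" unfolding ab(2) ipS by (simp add: mult.commute)
  qed
  then show ?case using ideal_sum_list[OF ip_ideal] x by metis
qed

lemma ip_iff: "x \<in> ideal_pow m P k \<longleftrightarrow> D k x" using ip_D D_ip by blast

lemma ip_mono: "j \<le> k \<Longrightarrow> x \<in> ideal_pow m P k \<Longrightarrow> x \<in> ideal_pow m P j"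
  unfolding ip_iff using D_le by blast

lemma ip_OK: "x \<in> ideal_pow m P k \<Longrightarrow> x \<in> OK m" unfolding ip_iff D_def by blast

lemma ip_1: "x \<in> ideal_pow m P 1 \<Longrightarrow> x \<in> P"
proof -
  assume "x \<in> ideal_pow m P 1"
  then have "x \<in> ideal_prod (OK_ring m) (OK m) P" using ipS[of 0] ip0 by simp
  then show "x \<in> P" using ring.ideal_prod_inter[OF rg ring.oneideal[OF rg] idl] by auto
qed

lemma ip_mult: "x \<in> ideal_pow m P i \<Longrightarrow> y \<in> ideal_pow m P j \<Longrightarrow> x * y \<in> ideal_pow m P (i+j)"
proof -
  assume "x \<in> ideal_pow m P i" "y \<in> ideal_pow m P j"
  then have Dx: "D i x" and Dy: "D j y" by (simp_all add: ip_iff)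
  have "prod_list ds * (x * y) \<in> OK m" if ds: "set ds \<subseteq> Dl" "length ds = i + j" for ds
  proof -
    have e: "prod_list ds * (x * y) = (prod_list (take i ds) * x) * (prod_list (drop i ds) * y)"
      using prod_list.append[of "take i ds" "drop i ds"] by (simp add: algebra_simps)
    have "prod_list (take i ds) * x \<in> OK m" using Dx ds set_take_subset[of i ds] unfolding D_def by simp
    moreover have "prod_list (drop i ds) * y \<in> OK m" using Dy ds set_drop_subset[of i ds] unfolding D_def by simp
    ultimately show ?thesis unfolding e using OK_mult[OF cr] by blast
  qed
  moreover have "x * y \<in> OK m" using Dx Dy unfolding D_def using OK_mult[OF cr] by blast
  ultimately show ?thesis unfolding ip_iff D_def by blast
qed

lemma ip_shift: "x \<in> ideal_pow m P (j + k) \<Longrightarrow> set ds \<subseteq> Dl \<Longrightarrow> length ds = j \<Longrightarrow> prod_list ds * x \<in> ideal_pow m P k"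
proof -
  assume x: "x \<in> ideal_pow m P (j + k)" and ds: "set ds \<subseteq> Dl" "length ds = j"
  have Dx: "D (j + k) x" using x by (simp add: ip_iff)
  have "D j x" using D_le[OF _ Dx] by simp
  then have a: "prod_list ds * x \<in> OK m" using ds unfolding D_def by blast
  have "prod_list es * (prod_list ds * x) \<in> OK m" if es: "set es \<subseteq> Dl" "length es = k" for es
  proof -
    have e: "prod_list es * (prod_list ds * x) = prod_list (es @ ds) * x" by (simp add: algebra_simps)
    show ?thesis unfolding e by (rule D_app[OF Dx]) (use es ds in auto)
  qed
  then show ?thesis unfolding ip_iff D_def using a by blast
qed

lemma ip_finite: "x \<in> OK m \<Longrightarrow> x \<noteq> 0 \<Longrightarrow> \<exists>k. x \<notin> ideal_pow m P k"
proof (rule ccontr)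
  assume x: "x \<in> OK m" "x \<noteq> 0" and "\<not> (\<exists>k. x \<notin> ideal_pow m P k)"
  then have all: "D k x" for k by (simp add: ip_iff)
  have dO: "d \<in> OK m" if d: "d \<in> Dl" for d
  proof -
    have "d ^ k * x \<in> OK m" for k
    proof -
      have "set (replicate k d) \<subseteq> Dl" using d by auto
      then have "prod_list (replicate k d) * x \<in> OK m" using all[of k] by (intro D_app) auto
      then show ?thesis by simp
    qed
    then show ?thesis using BD[OF cr x Dl_QF[OF d]] by blast
  qed
  have "\<forall>z\<in>set (map (\<lambda>(a,b). a * b) ps). z \<in> P"
  proof
    fix z assume "z \<in> set (map (\<lambda>(a,b). a * b) ps)"
    then obtain a b where ab: "(a,b) \<in> set ps" "z = a * b" by auto
    show "z \<in> P" unfolding ab(2) using P_rmult[OF ps_fst[OF ab(1)] dO[OF ps_snd[OF ab(1)]]] .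
  qed
  then have "1 \<in> P" using ideal_sum_list[OF idl] ps_props(1) by metis
  then show False using one_notin by simp
qed

lemma ord_iff: "x \<in> OK m \<Longrightarrow> x \<noteq> 0 \<Longrightarrow> x \<in> ideal_pow m P k \<longleftrightarrow> k \<le> ordO m P x"
proof -
  assume x: "x \<in> OK m" "x \<noteq> 0"
  obtain K where K: "x \<notin> ideal_pow m P K" using ip_finite[OF x] by blast
  have bd: "y \<le> K" if "x \<in> ideal_pow m P y" for y
  proof (rule ccontr)
    assume "\<not> y \<le> K"
    then show False using ip_mono[of K y x] that K by simp
  qed
  have x0: "x \<in> ideal_pow m P 0" using x by (simp add: ip0)
  have g: "x \<in> ideal_pow m P (ordO m P x)" unfolding ordO_def using GreatestI_nat[of "\<lambda>k. x \<in> ideal_pow m P k" 0 K, OF x0 bd] .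
  show ?thesis
  proof
    assume "x \<in> ideal_pow m P k"
    then show "k \<le> ordO m P x" unfolding ordO_def using Greatest_le_nat[of "\<lambda>k. x \<in> ideal_pow m P k" k K, OF _ bd] by blast
  next
    assume "k \<le> ordO m P x"
    then show "x \<in> ideal_pow m P k" using ip_mono g by blast
  qed
qed

lemma not_ip_Suc:
  assumes "x \<in> ideal_pow m P i" "x \<notin> ideal_pow m P (Suc i)"
  shows "\<exists>ds. set ds \<subseteq> Dl \<and> length ds = i \<and> prod_list ds * x \<in> OK m \<and> prod_list ds * x \<notin> P"
proof -
  have Dx: "D i x" using assms(1) by (simp add: ip_iff)
  have "\<not> D (Suc i) x" using assms(2) by (simp add: ip_iff)
  then obtain es where es: "set es \<subseteq> Dl" "length es = Suc i" "prod_list es * x \<notin> OK m"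
    using Dx unfolding D_def by blast
  then obtain d ds where dd: "es = d # ds" by (cases es) auto
  have ds: "set ds \<subseteq> Dl" "length ds = i" "d \<in> Dl" using es dd by auto
  have in1: "prod_list ds * x \<in> OK m" using Dx ds unfolding D_def by blast
  have "d * (prod_list ds * x) \<notin> OK m" using es(3) unfolding dd by (simp add: mult.assoc)
  then have "prod_list ds * x \<notin> P" using Dl_mult[OF ds(3)] by blast
  then show ?thesis using ds in1 by blast
qed

lemma ordO_mult:
  assumes x: "x \<in> OK m" "x \<noteq> 0" and y: "y \<in> OK m" "y \<noteq> 0"
  shows "ordO m P (x * y) = ordO m P x + ordO m P y"
proof -
  define i where "i = ordO m P x"
  define j where "j = ordO m P y"
  have xy: "x * y \<in> OK m" "x * y \<noteq> 0" using x y OK_mult[OF cr] by auto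
  have xi: "x \<in> ideal_pow m P i" "x \<notin> ideal_pow m P (Suc i)" using ord_iff[OF x] unfolding i_def by auto
  have yj: "y \<in> ideal_pow m P j" "y \<notin> ideal_pow m P (Suc j)" using ord_iff[OF y] unfolding j_def by auto
  have "i + j \<le> ordO m P (x * y)" using ip_mult[OF xi(1) yj(1)] ord_iff[OF xy] by blast
  moreover have "\<not> Suc (i + j) \<le> ordO m P (x * y)"
  proof
    assume "Suc (i + j) \<le> ordO m P (x * y)"
    then have h: "x * y \<in> ideal_pow m P ((i + j) + 1)" using ord_iff[OF xy] by simp
    obtain ds where ds: "set ds \<subseteq> Dl" "length ds = i" "prod_list ds * x \<in> OK m" "prod_list ds * x \<notin> P"
      using not_ip_Suc[OF xi] by blast
    obtain es where es: "set es \<subseteq> Dl" "length es = j" "prod_list es * y \<in> OK m" "prod_list es * y \<notin> P"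
      using not_ip_Suc[OF yj] by blast
    have "prod_list (ds @ es) * (x * y) \<in> ideal_pow m P 1"
      by (rule ip_shift[OF h]) (use ds es in auto)
    then have "(prod_list ds * x) * (prod_list es * y) \<in> P" using ip_1 by (simp add: algebra_simps)
    then show False using P_prime[OF ds(3) es(3)] ds(4) es(4) by blast
  qed
  ultimately show ?thesis unfolding i_def j_def by simp
qed

end

lemma sqrt_neg_nz: "m > 0 \<Longrightarrow> sqrt_neg m \<noteq> 0"
  unfolding sqrt_neg_def by simp

lemma OK_sqrt_neg: "sqrt_neg m \<in> OK m"
proof (rule OK_intro[OF QF_sqrt_neg])
  show "tr (sqrt_neg m) \<in> \<int>" unfolding tr_def by simp
  have "nm (sqrt_neg m) = of_nat m" unfolding nm_def using sqrt_neg_sq[of m] by simp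
  then show "nm (sqrt_neg m) \<in> \<int>" by simp
qed

context PI begin

lemma QF_frac: "x \<in> QF m \<Longrightarrow> \<exists>a (D::nat). a \<in> OK m \<and> D > 0 \<and> x = a / of_nat D"
proof -
  assume "x \<in> QF m"
  then obtain r1 r2 where x: "x = of_rat r1 + of_rat r2 * sqrt_neg m" unfolding QF_iff by blast
  obtain u1 w1 where q1: "quotient_of r1 = (u1, w1)" by (cases "quotient_of r1") auto
  obtain u2 w2 where q2: "quotient_of r2 = (u2, w2)" by (cases "quotient_of r2") auto
  have w: "w1 > 0" "w2 > 0" using quotient_of_denom_pos[OF q1] quotient_of_denom_pos[OF q2] .
  have r: "(of_rat r1 :: complex) = of_int u1 / of_int w1" "(of_rat r2 :: complex) = of_int u2 / of_int w2"
    using quotient_of_div[OF q1] quotient_of_div[OF q2] by (simp_all add: of_rat_divide)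
  define a where "a = of_int (u1 * w2) + of_int (u2 * w1) * sqrt_neg m"
  have aO: "a \<in> OK m" unfolding a_def
    using OK_add[OF cr OK_of_int OK_mult[OF cr OK_of_int OK_sqrt_neg]] .
  have "of_nat (nat (w1 * w2)) = (of_int (w1 * w2) :: complex)" using w by simp
  moreover have "x = a / of_int (w1 * w2)" unfolding x r a_def using w by (simp add: field_simps)
  ultimately have "x = a / of_nat (nat (w1 * w2))" by simp
  moreover have "nat (w1 * w2) > 0" using w by simp
  ultimately show ?thesis using aO by blast
qed

lemma ordK_eq:
  assumes a: "a \<in> OK m" "a \<noteq> 0" and b: "b \<in> OK m" "b \<noteq> 0"
  shows "ordK m P (a / b) = int (ordO m P a) - int (ordO m P b)"
proof -
  have ex: "\<exists>k. \<exists>a' b'. a' \<in> OK m \<and> b' \<in> OK m \<and> a' \<noteq> 0 \<and> b' \<noteq> 0 \<and> a / b = a' / b'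
            \<and> k = int (ordO m P a') - int (ordO m P b')" using a b by blast
  obtain a' b' where ab: "a' \<in> OK m" "b' \<in> OK m" "a' \<noteq> 0" "b' \<noteq> 0" "a / b = a' / b'"
      "ordK m P (a / b) = int (ordO m P a') - int (ordO m P b')"
    using someI_ex[OF ex] unfolding ordK_def by blast
  have "a * b' = a' * b" using ab(5) a b ab(4) by (simp add: field_simps)
  then have "ordO m P (a * b') = ordO m P (a' * b)" by simp
  then have "ordO m P a + ordO m P b' = ordO m P a' + ordO m P b"
    using ordO_mult[OF a ab(2,4)] ordO_mult[OF ab(1,3) b] by simp
  then show ?thesis using ab(6) by simp
qed

lemma ordO_1: "ordO m P 1 = 0"
proof -
  have "\<not> 1 \<le> ordO m P 1"
  proof
    assume "1 \<le> ordO m P 1"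
    then have "1 \<in> ideal_pow m P 1" using ord_iff[of 1 1] by simp
    then show False using ip_1 one_notin by blast
  qed
  then show ?thesis by simp
qed

lemma ordO_uminus: assumes "a \<in> OK m" "a \<noteq> 0" shows "ordO m P (- a) = ordO m P a"
proof -
  have mO: "- a \<in> OK m" "- a \<noteq> 0" using assms OK_uminus[OF cr] by auto
  have "- a \<in> ideal_pow m P k \<longleftrightarrow> a \<in> ideal_pow m P k" for k
  proof -
    have "(-1) \<in> OK m" using OK_of_int[of "-1" m] by simp
    then have "x \<in> ideal_pow m P k \<Longrightarrow> - x \<in> ideal_pow m P k" for x
      using ideal_OK(4)[OF ip_ideal, of x k "-1"] by simp
    from this[of a] this[of "-a"] show ?thesis by auto
  qed
  then have "k \<le> ordO m P (- a) \<longleftrightarrow> k \<le> ordO m P a" for k using ord_iff[OF mO] ord_iff[OF assms] by simp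
  then show ?thesis by (meson le_antisym order_refl)
qed

lemma ordK_mult:
  assumes x: "x \<in> QF m" "x \<noteq> 0" and y: "y \<in> QF m" "y \<noteq> 0"
  shows "ordK m P (x * y) = ordK m P x + ordK m P y"
proof -
  obtain a D where aD: "a \<in> OK m" "D > 0" "x = a / of_nat D" using QF_frac[OF x(1)] by blast
  obtain b E where bE: "b \<in> OK m" "E > 0" "y = b / of_nat E" using QF_frac[OF y(1)] by blast
  have a0: "a \<noteq> 0" using aD x(2) by auto
  have b0: "b \<noteq> 0" using bE y(2) by auto
  have D0: "(of_nat D :: complex) \<in> OK m" "(of_nat D :: complex) \<noteq> 0" using aD by auto
  have E0: "(of_nat E :: complex) \<in> OK m" "(of_nat E :: complex) \<noteq> 0" using bE by auto
  have "x * y = (a * b) / (of_nat D * of_nat E)" using aD bE by simp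
  then have "ordK m P (x * y) = int (ordO m P (a * b)) - int (ordO m P (of_nat D * of_nat E))"
    using ordK_eq[of "a*b" "of_nat D * of_nat E"] aD bE a0 b0 OK_mult[OF cr aD(1) bE(1)] OK_mult[OF cr D0(1) E0(1)] by simp
  also have "\<dots> = (int (ordO m P a) - int (ordO m P (of_nat D))) + (int (ordO m P b) - int (ordO m P (of_nat E)))"
    using ordO_mult[OF aD(1) a0 bE(1) b0] ordO_mult[OF D0 E0] by simp
  also have "\<dots> = ordK m P x + ordK m P y"
    using ordK_eq[OF aD(1) a0 D0] ordK_eq[OF bE(1) b0 E0] aD(3) bE(3) by simp
  finally show ?thesis .
qed

lemma ordK_one: "ordK m P 1 = 0"
  using ordK_eq[of 1 1] ordO_1 by simp

lemma ordK_power: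
  assumes x: "x \<in> QF m" "x \<noteq> 0"
  shows "ordK m P (x ^ k) = int k * ordK m P x"
proof (induct k)
  case 0 then show ?case using ordK_one by simp
next
  case (Suc k)
  have "ordK m P (x ^ Suc k) = ordK m P (x * x ^ k)" by simp
  also have "\<dots> = ordK m P x + ordK m P (x ^ k)" using ordK_mult[OF x QF_power[OF x(1)]] x by simp
  finally show ?case using Suc by (simp add: algebra_simps)
qed

lemma ordK_uminus:
  assumes x: "x \<in> QF m" "x \<noteq> 0"
  shows "ordK m P (- x) = ordK m P x"
proof -
  obtain a D where aD: "a \<in> OK m" "D > 0" "x = a / of_nat D" using QF_frac[OF x(1)] by blast
  have a0: "a \<noteq> 0" using aD x(2) by auto
  have D0: "(of_nat D :: complex) \<in> OK m" "(of_nat D :: complex) \<noteq> 0" using aD by auto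
  have "- x = (- a) / of_nat D" using aD by simp
  then have "ordK m P (- x) = int (ordO m P (- a)) - int (ordO m P (of_nat D))"
    using ordK_eq[of "- a" "of_nat D"] OK_uminus[OF cr aD(1)] a0 D0 by simp
  also have "\<dots> = ordK m P x" using ordO_uminus[OF aD(1) a0] ordK_eq[OF aD(1) a0 D0] aD(3) by simp
  finally show ?thesis .
qed

lemma ordK_ultra:
  assumes x: "x \<in> QF m" "x \<noteq> 0" and y: "y \<in> QF m" "y \<noteq> 0" and xy: "x + y \<noteq> 0"
  shows "min (ordK m P x) (ordK m P y) \<le> ordK m P (x + y)"
proof -
  obtain a D where aD: "a \<in> OK m" "D > 0" "x = a / of_nat D" using QF_frac[OF x(1)] by blast
  obtain b E where bE: "b \<in> OK m" "E > 0" "y = b / of_nat E" using QF_frac[OF y(1)] by blast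
  define c where "c = (of_nat (D * E) :: complex)"
  have c1: "c \<in> OK m" unfolding c_def by (rule OK_of_nat)
  have c2: "c \<noteq> 0" unfolding c_def using aD bE by simp
  note c = c1 c2
  define a' where "a' = a * of_nat E"
  define b' where "b' = b * of_nat D"
  have a': "a' \<in> OK m" "a' \<noteq> 0" unfolding a'_def using aD bE x OK_mult[OF cr] by auto
  have b': "b' \<in> OK m" "b' \<noteq> 0" unfolding b'_def using aD bE y OK_mult[OF cr] by auto
  have ex: "x = a' / c" unfolding a'_def c_def using aD bE by simp
  have ey: "y = b' / c" unfolding b'_def c_def using aD bE by simp
  have exy: "x + y = (a' + b') / c" using ex ey by (simp add: add_divide_distrib)
  have s: "a' + b' \<in> OK m" "a' + b' \<noteq> 0" using OK_add[OF cr a'(1) b'(1)] exy xy by auto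
  define k where "k = min (ordO m P a') (ordO m P b')"
  have "a' \<in> ideal_pow m P k" using ord_iff[OF a'] unfolding k_def by simp
  moreover have "b' \<in> ideal_pow m P k" using ord_iff[OF b'] unfolding k_def by simp
  ultimately have "a' + b' \<in> ideal_pow m P k" using ideal_OK(3)[OF ip_ideal] by blast
  then have "k \<le> ordO m P (a' + b')" using ord_iff[OF s] by simp
  then show ?thesis
    using ordK_eq[OF a' c] ordK_eq[OF b' c] ordK_eq[OF s c] ex ey exy unfolding k_def by simp
qed

lemma ordK_strict:
  assumes x: "x \<in> QF m" "x \<noteq> 0" and y: "y \<in> QF m" "y \<noteq> 0" and xy: "x + y \<noteq> 0"
    and ne: "ordK m P x \<noteq> ordK m P y"
  shows "ordK m P (x + y) = min (ordK m P x) (ordK m P y)"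
proof -
  have s: "x + y \<in> QF m" using QF_add[OF x(1) y(1)] .
  have my: "- y \<in> QF m" "- y \<noteq> 0" using QF_minus[OF y(1)] y by auto
  have mx: "- x \<in> QF m" "- x \<noteq> 0" using QF_minus[OF x(1)] x by auto
  have 1: "min (ordK m P (x + y)) (ordK m P (- y)) \<le> ordK m P x"
    using ordK_ultra[OF s xy my] x by simp
  have 2: "min (ordK m P (x + y)) (ordK m P (- x)) \<le> ordK m P y"
    using ordK_ultra[OF s xy mx] y by (simp add: add.commute)
  show ?thesis using ordK_ultra[OF x y xy] 1 2 ordK_uminus[OF x] ordK_uminus[OF y] ne by linarith
qed

lemma three:
  assumes x: "x \<in> QF m" "x \<noteq> 0" and y: "y \<in> QF m" "y \<noteq> 0" and xy: "x + y \<noteq> 0"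
    and d: "ordK m P x \<noteq> ordK m P y" "ordK m P x \<noteq> ordK m P (x + y)" "ordK m P y \<noteq> ordK m P (x + y)"
  shows False
  using ordK_strict[OF x y xy d(1)] d by linarith

end

lemma distinct3:
  assumes "pw_distinct_mod l a b c" "X = a + int l * s" "Y = b + int l * t" "Z = c + int l * u"
  shows "X \<noteq> Y \<and> X \<noteq> Z \<and> Y \<noteq> Z"
proof -
  have e: "(a' + int l * s') mod int l = a' mod int l" for a' s' by simp
  show ?thesis using assms e[of a s] e[of b t] e[of c u] unfolding pw_distinct_mod_def cong_def by metis
qed


theorem lemma9p1:
  fixes l R S T S' v u m n :: nat and \<epsilon> :: complex and q :: "complex set"
  assumes "prime l"
    and "R > 0" and "S > 0" and "T > 0"
    and "coprime R S" and "coprime R T" and "coprime S T"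
    and "S' = (\<Prod>p \<in> {p \<in> prime_factors S. odd (multiplicity p S)}. p)"
    and "v > 0" and "S * S' = v ^ 2"
    and "u = R * S'"
    and "m > 0" and "squarefree m" and "n > 0" and "T * S' = m * n ^ 2"
    and "E_rep m l u n \<epsilon>"
    and "prime_ideal_OK m q"
    and "pw_distinct_mod l (ordK m q (of_nat v)) (ordK m q (of_nat n * sqrt_neg m)) (ordK m q \<epsilon>)
         \<or> pw_distinct_mod l (ordK m q (2 * of_nat v)) (ordK m q \<epsilon>) (ordK m q (cnj \<epsilon>))
         \<or> pw_distinct_mod l (ordK m q (2 * of_nat n * sqrt_neg m)) (ordK m q \<epsilon>) (ordK m q (cnj \<epsilon>))"
  shows "\<not> (\<exists>\<sigma>::int. \<exists>\<eta> \<in> QF m.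
            of_nat v * of_int \<sigma> ^ l + of_nat n * sqrt_neg m = \<epsilon> * \<eta> ^ l)"
proof
  assume "\<exists>\<sigma>::int. \<exists>\<eta> \<in> QF m. of_nat v * of_int \<sigma> ^ l + of_nat n * sqrt_neg m = \<epsilon> * \<eta> ^ l"
  then obtain \<sigma> :: int and \<eta> where \<eta>Q: "\<eta> \<in> QF m"
    and eq: "of_nat v * of_int \<sigma> ^ l + of_nat n * sqrt_neg m = \<epsilon> * \<eta> ^ l" by blast
  interpret PI m q using assms(17) by unfold_locales
  have l0: "l > 0" using assms(1) prime_gt_0_nat by blast
  have eQ: "\<epsilon> \<in> QF m" "\<epsilon> \<noteq> 0" using assms(16) unfolding E_rep_def selmer_rep_def by auto
  have ecQ: "cnj \<epsilon> \<in> QF m" "cnj \<epsilon> \<noteq> 0" using QF_cnj[OF eQ(1)] eQ(2) by auto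
  define A where "A = of_nat v * (of_int \<sigma> :: complex) ^ l"
  define B where "B = of_nat n * sqrt_neg m"
  define C where "C = \<epsilon> * \<eta> ^ l"
  define C' where "C' = cnj \<epsilon> * cnj \<eta> ^ l"
  have eq1: "A + B = C" using eq unfolding A_def B_def C_def .
  have "cnj (A + B) = cnj C" using eq1 by simp
  then have eq2: "A - B = C'" unfolding A_def B_def C_def C'_def by simp
  have BQ: "B \<in> QF m" "B \<noteq> 0" unfolding B_def
    using QF_mult[OF QF_of_nat QF_sqrt_neg] assms(14) sqrt_neg_nz[OF assms(12)] by auto
  have \<eta>0: "\<eta> \<noteq> 0"
  proof
    assume "\<eta> = 0"
    then have "C = 0" "C' = 0" unfolding C_def C'_def using l0 by auto
    then have "B = 0" using eq1 eq2 by (simp add: algebra_simps)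
    then show False using BQ by simp
  qed
  have \<eta>cQ: "cnj \<eta> \<in> QF m" "cnj \<eta> \<noteq> 0" using QF_cnj[OF \<eta>Q] \<eta>0 by auto
  have CQ: "C \<in> QF m" "C \<noteq> 0" unfolding C_def using QF_mult[OF eQ(1) QF_power[OF \<eta>Q]] eQ(2) \<eta>0 by auto
  have C'Q: "C' \<in> QF m" "C' \<noteq> 0" unfolding C'_def using QF_mult[OF ecQ(1) QF_power[OF \<eta>cQ(1)]] ecQ(2) \<eta>cQ(2) by auto
  have oC: "ordK m q C = ordK m q \<epsilon> + int l * ordK m q \<eta>" unfolding C_def
    using ordK_mult[OF eQ QF_power[OF \<eta>Q]] ordK_power[OF \<eta>Q \<eta>0] \<eta>0 by simp
  have oC': "ordK m q C' = ordK m q (cnj \<epsilon>) + int l * ordK m q (cnj \<eta>)" unfolding C'_def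
    using ordK_mult[OF ecQ QF_power[OF \<eta>cQ(1)]] ordK_power[OF \<eta>cQ] \<eta>cQ by simp
  note d = assms(18)
  show False
  proof (cases "\<sigma> = 0")
    case True
    then have "A = 0" unfolding A_def using l0 by simp
    then have BC: "B = C" and BC': "- B = C'" using eq1 eq2 by auto
    have oCC: "ordK m q C' = ordK m q C" using BC BC' ordK_uminus[OF CQ] by simp
    from d show False
    proof (elim disjE)
      assume h: "pw_distinct_mod l (ordK m q (of_nat v)) (ordK m q (of_nat n * sqrt_neg m)) (ordK m q \<epsilon>)"
      show False using distinct3[OF h, of _ 0 "ordK m q B" 0 "ordK m q C" "ordK m q \<eta>"] oC BC
        unfolding B_def by simp
    next
      assume h: "pw_distinct_mod l (ordK m q (2 * of_nat v)) (ordK m q \<epsilon>) (ordK m q (cnj \<epsilon>))"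
      show False using distinct3[OF h, of _ 0 "ordK m q C" "ordK m q \<eta>" "ordK m q C'" "ordK m q (cnj \<eta>)"] oC oC' oCC
        by simp
    next
      assume h: "pw_distinct_mod l (ordK m q (2 * of_nat n * sqrt_neg m)) (ordK m q \<epsilon>) (ordK m q (cnj \<epsilon>))"
      show False using distinct3[OF h, of _ 0 "ordK m q C" "ordK m q \<eta>" "ordK m q C'" "ordK m q (cnj \<eta>)"] oC oC' oCC
        by simp
    qed
  next
    case False
    have sQ: "(of_int \<sigma> :: complex) \<in> QF m" "(of_int \<sigma> :: complex) \<noteq> 0" using QF_of_int False by auto
    have vQ: "(of_nat v :: complex) \<in> QF m" "(of_nat v :: complex) \<noteq> 0" using QF_of_nat assms(9) by auto
    have AQ: "A \<in> QF m" "A \<noteq> 0" unfolding A_def using QF_mult[OF vQ(1) QF_power[OF sQ(1)]] vQ(2) sQ(2) by auto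
    have oA: "ordK m q A = ordK m q (of_nat v) + int l * ordK m q (of_int \<sigma>)" unfolding A_def
      using ordK_mult[OF vQ QF_power[OF sQ(1)]] ordK_power[OF sQ] sQ by simp
    from d show False
    proof (elim disjE)
      assume h: "pw_distinct_mod l (ordK m q (of_nat v)) (ordK m q (of_nat n * sqrt_neg m)) (ordK m q \<epsilon>)"
      have "ordK m q A \<noteq> ordK m q B \<and> ordK m q A \<noteq> ordK m q C \<and> ordK m q B \<noteq> ordK m q C"
        using distinct3[OF h oA, of "ordK m q B" 0 "ordK m q C" "ordK m q \<eta>"] oC unfolding B_def by simp
      then show False using three[OF AQ BQ] eq1 CQ by simp
    next
      assume h: "pw_distinct_mod l (ordK m q (2 * of_nat v)) (ordK m q \<epsilon>) (ordK m q (cnj \<epsilon>))"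
      have "C + C' = (A + B) + (A - B)" using eq1 eq2 by simp
      also have "\<dots> = 2 * A" by simp
      finally have 2: "C + C' = (2 * of_nat v) * of_int \<sigma> ^ l" unfolding A_def by (simp add: mult.assoc)
      have vQ2: "(2 * of_nat v :: complex) \<in> QF m" "(2 * of_nat v :: complex) \<noteq> 0"
        using QF_of_nat[of "2 * v" m] assms(9) by auto
      have o2: "ordK m q (C + C') = ordK m q (2 * of_nat v) + int l * ordK m q (of_int \<sigma>)" unfolding 2
        using ordK_mult[OF vQ2 QF_power[OF sQ(1)]] ordK_power[OF sQ] sQ by simp
      have nz: "C + C' \<noteq> 0" unfolding 2 using sQ vQ2 by simp
      have "ordK m q (C + C') \<noteq> ordK m q C \<and> ordK m q (C + C') \<noteq> ordK m q C' \<and> ordK m q C \<noteq> ordK m q C'"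
        using distinct3[OF h o2 oC oC'] .
      then show False using three[OF CQ C'Q nz] by auto
    next
      assume h: "pw_distinct_mod l (ordK m q (2 * of_nat n * sqrt_neg m)) (ordK m q \<epsilon>) (ordK m q (cnj \<epsilon>))"
      have 2: "C + (- C') = 2 * of_nat n * sqrt_neg m" using eq1 eq2 unfolding B_def by (simp add: algebra_simps)
      have mC': "- C' \<in> QF m" "- C' \<noteq> 0" using QF_minus[OF C'Q(1)] C'Q(2) by auto
      have nz: "C + (- C') \<noteq> 0" unfolding 2 using BQ unfolding B_def by simp
      have om: "ordK m q (- C') = ordK m q (cnj \<epsilon>) + int l * ordK m q (cnj \<eta>)" using ordK_uminus[OF C'Q] oC' by simp
      have "ordK m q (C + (- C')) \<noteq> ordK m q C \<and> ordK m q (C + (- C')) \<noteq> ordK m q (- C') \<and> ordK m q C \<noteq> ordK m q (- C')"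
        using distinct3[OF h _ oC om, of _ 0] unfolding 2 by simp
      then show False using three[OF CQ mC' nz] by auto
    qed
  qed
qed

end
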